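(* Let $\delta_0>0$. There exists $k_0$ such that for all $k\ge k_0$ and all $\delta\in[\delta_0,1-2/k]$ with $\delta k+k-1$ an odd integer, every point $(b_1,\dots,b_k,b_{12},\dots,b_{(k-1)k})\in KTW_P$ satisfies \[\delta k\alpha+\beta\ge\frac{(\delta^2k-1)|\Delta|}{4}+\frac12 .\]
   Context: $P(x)=\operatorname{sign}(\delta k x_1+\sum_{i=2}^kx_i)$. For $x\in\{-1,1\}^k$ let $p(x)\in\{-1,1\}^{k+\binom k2}$ be the vector $(x_1,\dots,x_k,x_1x_2,x_1x_3,\dots,x_{k-1}x_k)$; $KTW_P$ is the convex hull of $\{p(x):P(x)=1\}$, with coordinates named $b_i$ ($i\in[k]$) and $b_{ij}$ ($i<j$). Define $\alpha=b_1$, $\beta=\sum_{i=2}^kb_i$, $E=\frac{\delta^2k^2}{2}-\frac k2+1$, and $\Delta$ by $\sum_{2\le i<j\le k}b_{ij}=E(1+\Delta)$. *)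

theory Defs
  imports "HOL-Analysis.Analysis"
begin

text \<open>Points x of {-1,1}^k are represented as functions nat => real, with
  x i in {-1,1} for i in {1..k} and x i = 0 outside (so the cube is a finite set).\<close>
definition cube :: "nat \<Rightarrow> (nat \<Rightarrow> real) set" where
  "cube k = {x. \<forall>i. (i \<in> {1..k} \<longrightarrow> x i \<in> {-1, 1}) \<and> (i \<notin> {1..k} \<longrightarrow> x i = 0)}"

definition Ppred :: "real \<Rightarrow> nat \<Rightarrow> (nat \<Rightarrow> real) \<Rightarrow> real" where
  "Ppred \<delta> k x = sgn (\<delta> * real k * x 1 + (\<Sum>i=2..k. x i))"

definition plin :: "nat \<Rightarrow> (nat \<Rightarrow> real) \<Rightarrow> nat \<Rightarrow> real" where
  "plin k x = (\<lambda>i. if i \<in> {1..k} then x i else 0)"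

definition pquad :: "nat \<Rightarrow> (nat \<Rightarrow> real) \<Rightarrow> nat \<Rightarrow> nat \<Rightarrow> real" where
  "pquad k x = (\<lambda>i j. if 1 \<le> i \<and> i < j \<and> j \<le> k then x i * x j else 0)"

text \<open>KTW_P: convex hull of the finite set {p(x) : P(x) = 1}, written out as the set of
  convex combinations of its points (cf. convex_hull_finite).\<close>
definition KTW :: "real \<Rightarrow> nat \<Rightarrow> ((nat \<Rightarrow> real) \<times> (nat \<Rightarrow> nat \<Rightarrow> real)) set" where
  "KTW \<delta> k = {(bl, bq). \<exists>u :: (nat \<Rightarrow> real) \<Rightarrow> real.
      (\<forall>x\<in>{x \<in> cube k. Ppred \<delta> k x = 1}. 0 \<le> u x)
    \<and> (\<Sum>x\<in>{x \<in> cube k. Ppred \<delta> k x = 1}. u x) = 1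
    \<and> bl = (\<lambda>i. \<Sum>x\<in>{x \<in> cube k. Ppred \<delta> k x = 1}. u x * plin k x i)
    \<and> bq = (\<lambda>i j. \<Sum>x\<in>{x \<in> cube k. Ppred \<delta> k x = 1}. u x * pquad k x i j)}"

end

theory Submission imports Defs begin
lemma intlem:
  fixes k D s L e :: int
  assumes "0 \<le> D" "D \<le> k-2" "\<bar>s\<bar> \<le> k-1" "L = e*D + s" "e = 1 \<or> e = -1" "L \<ge> 1"
  shows "\<bar>s^2-D^2-1\<bar> \<le> 2*k*(2*L-1)"
  using assms(5)
proof
  assume e: "e = 1"
  hence L: "L = D + s" using assms by simp
  have N: "s^2-D^2-1 = L*(s-D) - 1" unfolding L by (simp add: power2_eq_square algebra_simps)
  have "\<bar>s - D\<bar> \<le> 2*k-1" using assms L by auto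
  hence a: "\<bar>L*(s-D)\<bar> \<le> L*(2*k-1)" using assms(6) by (simp add: abs_mult mult_left_mono)
  have b: "L*(2*k+1) \<ge> 1*(2*k+1)" using assms by (intro mult_right_mono) auto
  have "\<bar>L*(s-D) - 1\<bar> \<le> \<bar>L*(s-D)\<bar> + 1" by linarith
  thus ?thesis unfolding N using a b by (simp add: algebra_simps)
next
  assume e: "e = -1"
  hence L: "L = s - D" using assms by simp
  have N: "s^2-D^2-1 = L*(s+D) - 1" unfolding L by (simp add: power2_eq_square algebra_simps)
  have "0 \<le> s + D" "s + D \<le> 2*k-3" using assms L by auto
  hence a: "L*(s+D) \<le> L*(2*k-3)" "0 \<le> L*(s+D)" using assms(6) by (simp_all add: mult_left_mono)
  have b: "L*(2*k+3) \<ge> 1*(2*k+3)" using assms by (intro mult_right_mono) auto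
  show ?thesis unfolding N using a b by (simp add: algebra_simps)
qed
lemma sq_sum:
  fixes x :: "nat \<Rightarrow> real"
  shows "(\<Sum>i=2..n. x i)^2 = (\<Sum>i=2..n. (x i)^2) + 2*(\<Sum>j=2..n. \<Sum>i=2..<j. x i * x j)"
proof (induction n)
  case 0 then show ?case by simp
next
  case (Suc n)
  show ?case
  proof (cases "Suc n < 2")
    case True then show ?thesis by simp
  next
    case False
    have e: "{2..<Suc n} = {2..n}" by auto
    have "(\<Sum>i=2..Suc n. x i)^2 = ((\<Sum>i=2..n. x i) + x (Suc n))^2"
      using False by simp
    also have "\<dots> = (\<Sum>i=2..n. x i)^2 + 2*(\<Sum>i=2..n. x i * x (Suc n)) + (x (Suc n))^2"
      by (simp add: power2_eq_square algebra_simps sum_distrib_left sum_distrib_right)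
    finally show ?thesis using Suc False by (simp add: e algebra_simps)
  qed
qed

theorem lemma4p6:
  fixes \<delta>\<^sub>0 :: real
  assumes "\<delta>\<^sub>0 > 0"
  shows "\<exists>k\<^sub>0::nat. \<forall>k::nat. \<forall>\<delta>::real. \<forall>bl bq.
    k \<ge> k\<^sub>0 \<longrightarrow> \<delta>\<^sub>0 \<le> \<delta> \<longrightarrow> \<delta> \<le> 1 - 2 / real k \<longrightarrow>
    (\<exists>m::int. odd m \<and> \<delta> * real k + real k - 1 = real_of_int m) \<longrightarrow>
    (bl, bq) \<in> KTW \<delta> k \<longrightarrow>
    (let \<alpha> = bl 1;
         \<beta> = (\<Sum>i=2..k. bl i);
         E = \<delta>\<^sup>2 * (real k)\<^sup>2 / 2 - real k / 2 + 1;
         \<Delta> = (\<Sum>j=2..k. \<Sum>i=2..<j. bq i j) / E - 1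
     in \<delta> * real k * \<alpha> + \<beta> \<ge> (\<delta>\<^sup>2 * real k - 1) * \<bar>\<Delta>\<bar> / 4 + 1 / 2)"
proof (rule exI[of _ 1], intro allI impI)
  fix k :: nat and \<delta> :: real and bl bq
  assume k1: "1 \<le> k" and d0: "\<delta>\<^sub>0 \<le> \<delta>" and d1: "\<delta> \<le> 1 - 2 / real k"
    and odd: "\<exists>m::int. odd m \<and> \<delta> * real k + real k - 1 = real_of_int m"
    and mem: "(bl, bq) \<in> KTW \<delta> k"
  define S where "S = {x \<in> cube k. Ppred \<delta> k x = 1}"
  from mem obtain u where u0: "\<forall>x\<in>S. 0 \<le> u x" and u1: "sum u S = 1"
    and bl: "bl = (\<lambda>i. \<Sum>x\<in>S. u x * plin k x i)"
    and bq: "bq = (\<lambda>i j. \<Sum>x\<in>S. u x * pquad k x i j)"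
    unfolding KTW_def S_def by auto
  have finS: "finite S" using u1 by (metis sum.infinite zero_neq_one)
  define L where "L x = \<delta> * real k * x 1 + (\<Sum>i=2..k. x i)" for x :: "nat \<Rightarrow> real"
  define Q where "Q x = (\<Sum>j=2..k. \<Sum>i=2..<j. x i * x j)" for x :: "nat \<Rightarrow> real"
  define E where "E = \<delta>\<^sup>2 * (real k)\<^sup>2 / 2 - real k / 2 + 1"
  define c where "c = (\<delta>\<^sup>2 * real k - 1) / 4"
  have alpha: "bl 1 = (\<Sum>x\<in>S. u x * x 1)" using k1 by (simp add: bl plin_def)
  have "(\<Sum>i=2..k. bl i) = (\<Sum>i=2..k. \<Sum>x\<in>S. u x * x i)"
    by (intro sum.cong) (auto simp: bl plin_def)
  also have "\<dots> = (\<Sum>x\<in>S. \<Sum>i=2..k. u x * x i)" by (rule sum.swap)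
  also have "\<dots> = (\<Sum>x\<in>S. u x * (\<Sum>i=2..k. x i))" by (simp add: sum_distrib_left)
  finally have beta: "(\<Sum>i=2..k. bl i) = (\<Sum>x\<in>S. u x * (\<Sum>i=2..k. x i))" .
  have "(\<Sum>j=2..k. \<Sum>i=2..<j. bq i j) = (\<Sum>j=2..k. \<Sum>i=2..<j. \<Sum>x\<in>S. u x * (x i * x j))"
    by (intro sum.cong) (auto simp: bq pquad_def)
  also have "\<dots> = (\<Sum>j=2..k. \<Sum>x\<in>S. \<Sum>i=2..<j. u x * (x i * x j))"
    by (intro sum.cong refl) (rule sum.swap)
  also have "\<dots> = (\<Sum>x\<in>S. \<Sum>j=2..k. \<Sum>i=2..<j. u x * (x i * x j))" by (rule sum.swap)
  also have "\<dots> = (\<Sum>x\<in>S. u x * Q x)" by (simp add: Q_def sum_distrib_left)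
  finally have quad: "(\<Sum>j=2..k. \<Sum>i=2..<j. bq i j) = (\<Sum>x\<in>S. u x * Q x)" .
  have lin: "\<delta> * real k * bl 1 + (\<Sum>i=2..k. bl i) = (\<Sum>x\<in>S. u x * L x)"
    unfolding alpha beta L_def by (simp add: sum_distrib_left sum.distrib algebra_simps)
  obtain m :: int where m: "\<delta> * real k + real k - 1 = real_of_int m" using odd by blast
  define Di where "Di = m - int k + 1"
  have Dreal: "\<delta> * real k = real_of_int Di" using m by (simp add: Di_def)
  have dpos: "\<delta> > 0" using assms d0 by linarith
  have Di0: "0 \<le> Di" using Dreal dpos k1
    by (metis of_int_0_le_iff mult_nonneg_nonneg less_imp_le of_nat_0_le_iff)
  have "\<delta> * real k \<le> (1 - 2 / real k) * real k" using d1 k1 by (intro mult_right_mono) auto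
  also have "\<dots> = real k - 2" using k1 by (simp add: field_simps)
  finally have Di1: "Di \<le> int k - 2" using Dreal by linarith
  have vert: "1 \<le> L x \<and> (0 \<le> c \<longrightarrow> c * \<bar>Q x / E - 1\<bar> + 1/2 \<le> L x)" if xS: "x \<in> S" for x
  proof -
    have xc: "\<And>i. i \<in> {1..k} \<Longrightarrow> x i = -1 \<or> x i = 1" using xS unfolding S_def cube_def by auto
    have Lpos: "L x > 0" using xS unfolding S_def Ppred_def L_def by (auto simp: sgn_1_pos)
    define s where "s = (\<Sum>i=2..k. x i)"
    have xc2: "\<bar>x i\<bar> = 1 \<and> (x i)^2 = 1 \<and> x i \<in> \<int>" if "i \<in> {2..k}" for i
    proof -
      have "i \<in> {1..k}" using that by auto
      from xc[OF this] show ?thesis by auto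
    qed
    have sInt: "s \<in> \<int>" unfolding s_def using xc2 by (intro Ints_sum) blast
    then obtain si where si: "s = real_of_int si" by (auto elim: Ints_cases)
    have "\<bar>s\<bar> \<le> (\<Sum>i=2..k. \<bar>x i\<bar>)" unfolding s_def by (rule sum_abs)
    also have "\<dots> = (\<Sum>i=2..k. 1)" using xc2 by (intro sum.cong) auto
    also have "\<dots> = real k - 1" using k1 by simp
    finally have sb: "\<bar>si\<bar> \<le> int k - 1" using si by linarith
    have x1: "x 1 = -1 \<or> x 1 = 1" using xc k1 by auto
    then obtain e :: int where e: "x 1 = real_of_int e" "e = 1 \<or> e = -1" by (metis of_int_1 of_int_minus)
    define Li where "Li = e * Di + si"
    have LLi: "L x = real_of_int Li" unfolding L_def Li_def
      using e(1) by (simp add: si s_def[symmetric] Dreal[symmetric] algebra_simps)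
    have Li1: "Li \<ge> 1" using Lpos LLi by linarith
    have ib: "\<bar>si^2-Di^2-1\<bar> \<le> 2*int k*(2*Li-1)"
      by (rule intlem[OF Di0 Di1 sb _ e(2) Li1]) (simp add: Li_def)
    have ibr: "\<bar>s^2 - (\<delta>*real k)^2 - 1\<bar> \<le> 2*real k*(2*L x-1)"
    proof -
      have "\<bar>s^2 - (\<delta>*real k)^2 - 1\<bar> = real_of_int \<bar>si^2-Di^2-1\<bar>" by (simp add: si Dreal)
      also have "\<dots> \<le> real_of_int (2*int k*(2*Li-1))" using ib by linarith
      also have "\<dots> = 2*real k*(2*L x-1)" by (simp add: LLi)
      finally show ?thesis .
    qed
    have sq1: "(\<Sum>i=2..k. (x i)^2) = real k - 1"
    proof -
      have "(\<Sum>i=2..k. (x i)^2) = (\<Sum>i=2..k. 1)" using xc2 by (intro sum.cong) auto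
      thus ?thesis using k1 by simp
    qed
    have Qx: "Q x = (s^2 - (real k - 1)) / 2" using sq_sum[of x k] sq1 unfolding Q_def s_def by simp
    show ?thesis
    proof
      show "1 \<le> L x" using Li1 LLi by simp
      show "0 \<le> c \<longrightarrow> c * \<bar>Q x / E - 1\<bar> + 1/2 \<le> L x"
      proof
        assume c0: "0 \<le> c"
        define D where "D = \<delta> * real k"
        have "\<delta>\<^sup>2 * real k \<ge> 1" using c0 unfolding c_def by simp
        hence "\<delta>\<^sup>2 * real k * real k \<ge> 1 * real k" using k1 by (intro mult_right_mono) auto
        hence Dk: "D^2 \<ge> real k" unfolding D_def by (simp add: power2_eq_square algebra_simps)
        have ED: "E = (D^2 - real k + 2)/2" unfolding E_def D_def by (simp add: power2_eq_square algebra_simps)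
        have Epos: "E > 0" using ED Dk by simp
        have Dx: "Q x / E - 1 = (s^2 - D^2 - 1) / (D^2 - real k + 2)"
          using Epos unfolding Qx ED by (simp add: field_simps)
        have cD: "c = (D^2 - real k) / (4 * real k)" unfolding c_def D_def using k1
          by (simp add: field_simps power2_eq_square)
        have "c * \<bar>Q x / E - 1\<bar> = ((D^2 - real k) / (D^2 - real k + 2)) * (\<bar>s^2 - D^2 - 1\<bar> / (4 * real k))"
          unfolding Dx cD using Dk by (simp add: abs_divide field_simps)
        also have "\<dots> \<le> \<bar>s^2 - D^2 - 1\<bar> / (4 * real k)"
          using Dk by (intro mult_left_le_one_le) auto
        also have "\<dots> \<le> (2*real k*(2*L x-1)) / (4 * real k)"
          using ibr k1 unfolding D_def by (intro divide_right_mono) auto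
        also have "\<dots> = L x - 1/2" using k1 by (simp add: field_simps)
        finally show "c * \<bar>Q x / E - 1\<bar> + 1/2 \<le> L x" by simp
      qed
    qed
  qed
  have sumL: "(\<Sum>x\<in>S. u x * L x) \<ge> 1"
  proof -
    have "(\<Sum>x\<in>S. u x * L x) \<ge> (\<Sum>x\<in>S. u x * 1)"
      using vert u0 by (intro sum_mono mult_left_mono) auto
    thus ?thesis using u1 by simp
  qed
  define \<Delta> where "\<Delta> = (\<Sum>j=2..k. \<Sum>i=2..<j. bq i j) / E - 1"
  have main: "c * \<bar>\<Delta>\<bar> + 1/2 \<le> (\<Sum>x\<in>S. u x * L x)"
  proof (cases "0 \<le> c")
    case False
    hence "c * \<bar>\<Delta>\<bar> \<le> 0" by (simp add: mult_nonpos_nonneg)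
    thus ?thesis using sumL by linarith
  next
    case True
    have "\<Delta> = (\<Sum>x\<in>S. u x * Q x) / E - (\<Sum>x\<in>S. u x)" unfolding \<Delta>_def quad u1 by simp
    also have "\<dots> = (\<Sum>x\<in>S. u x * (Q x / E - 1))"
      by (simp add: sum_divide_distrib sum_subtractf right_diff_distrib)
    finally have De: "\<Delta> = (\<Sum>x\<in>S. u x * (Q x / E - 1))" .
    have "\<bar>\<Delta>\<bar> \<le> (\<Sum>x\<in>S. \<bar>u x * (Q x / E - 1)\<bar>)" unfolding De by (rule sum_abs)
    also have "\<dots> = (\<Sum>x\<in>S. u x * \<bar>Q x / E - 1\<bar>)" using u0 by (intro sum.cong) (auto simp: abs_mult)
    finally have "c * \<bar>\<Delta>\<bar> \<le> c * (\<Sum>x\<in>S. u x * \<bar>Q x / E - 1\<bar>)" using True by (intro mult_left_mono)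
    also have "\<dots> + 1/2 = (\<Sum>x\<in>S. u x * (c * \<bar>Q x / E - 1\<bar> + 1/2))"
    proof -
      have "(\<Sum>x\<in>S. u x * (c * \<bar>Q x / E - 1\<bar> + 1/2)) = c * (\<Sum>x\<in>S. u x * \<bar>Q x / E - 1\<bar>) + (\<Sum>x\<in>S. u x) * (1/2)"
        by (simp add: sum.distrib sum_distrib_left sum_distrib_right algebra_simps)
      thus ?thesis using u1 by simp
    qed
    also have "\<dots> \<le> (\<Sum>x\<in>S. u x * L x)"
      using vert u0 True by (intro sum_mono mult_left_mono) auto
    finally show ?thesis by simp
  qed
  show "let \<alpha> = bl 1;
         \<beta> = (\<Sum>i=2..k. bl i);
         E = \<delta>\<^sup>2 * (real k)\<^sup>2 / 2 - real k / 2 + 1;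
         \<Delta> = (\<Sum>j=2..k. \<Sum>i=2..<j. bq i j) / E - 1
     in \<delta> * real k * \<alpha> + \<beta> \<ge> (\<delta>\<^sup>2 * real k - 1) * \<bar>\<Delta>\<bar> / 4 + 1 / 2"
    using main lin unfolding Let_def \<Delta>_def E_def c_def by simp
qed
end
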